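(* Assume (A1). Then: (i) there is $c>0$ such that for all $\rho,h>0$ with $T/h$ an integer, all $\mu\in C([0,T];\mathcal{P}_1(\mathbb{R}^d))$ and all $t\in[0,T]$, the function $v_{\rho,h}[\mu](\cdot,t)$ is Lipschitz with constant $c$; (ii) there is $c>0$, independent of $(\rho,h,\mu,t)$, such that $v_{\rho,h}[\mu](x_i+x_j,t)-2v_{\rho,h}[\mu](x_i,t)+v_{\rho,h}[\mu](x_i-x_j,t)\le c|x_j|^2$ for all grid points $x_i,x_j$ and all $t\in[0,T]$.
   Context: $\mathcal{P}_1$: probability measures with finite first moment, 1-Wasserstein distance. Assumption (A1): $F,G:\mathbb{R}^d\times\mathcal{P}_1\to\mathbb{R}$ uniformly bounded, $F(\cdot,m),G(\cdot,m)\in C^2$ with first and second derivatives bounded uniformly in $x,m$; $\sigma:[0,T]\to\mathbb{R}^{d\times r}$ with continuous columns $\sigma_\ell$; $m_0$ absolutely continuous with bounded compactly supported density. Grid: $N=T/h$, $x_i=i\rho$ ($i\in\mathbb{Z}^d$), $t_k=kh$; $\beta_i$ barycentric coordinate relative to $x_i$ of a fixed regular triangulation with vertices on the grid; $I[f]=\sum_if_i\beta_i$. Scheme: $v_{i,N}=G(x_i,\mu(T))$, and for $k=N-1,\dots,0$, $v_{i,k}=\inf_{\alpha\in\mathbb{R}^d}\big[\frac{1}{2r}\sum_{\ell=1}^r(I[v_{\cdot,k+1}](x_i-h\alpha+\sqrt{hr}\sigma_\ell(t_k))+I[v_{\cdot,k+1}](x_i-h\alpha-\sqrt{hr}\sigma_\ell(t_k)))+\frac12h|\alpha|^2+hF(x_i,\mu(t_k))\big]$;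 $v_{\rho,h}[\mu](x,t)=I[v_{\cdot,[t/h]}](x)$ with $[\cdot]$ the integer part. *)

theory Defs
  imports "HOL-Probability.Probability"
begin

definition P1 :: "('a::euclidean_space) measure \<Rightarrow> bool" where
  "P1 m \<longleftrightarrow> prob_space m \<and> sets m = sets (borel :: 'a measure) \<and>
     (\<integral>\<^sup>+ x. ennreal (norm x) \<partial>m) < \<infinity>"

definition couplings :: "('a::euclidean_space) measure \<Rightarrow> 'a measure \<Rightarrow> ('a \<times> 'a) measure set" where
  "couplings m m' = {\<pi>. prob_space \<pi> \<and> sets \<pi> = sets (borel :: ('a \<times> 'a) measure) \<and>
      distr \<pi> borel fst = m \<and> distr \<pi> borel snd = m'}"

definition W1 :: "('a::euclidean_space) measure \<Rightarrow> 'a measure \<Rightarrow> ennreal" where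
  "W1 m m' = (INF \<pi>\<in>couplings m m'. \<integral>\<^sup>+ z. ennreal (dist (fst z) (snd z)) \<partial>\<pi>)"

definition cont_P1_curve :: "real \<Rightarrow> (real \<Rightarrow> ('a::euclidean_space) measure) \<Rightarrow> bool" where
  "cont_P1_curve T \<mu> \<longleftrightarrow> (\<forall>t\<in>{0..T}. P1 (\<mu> t)) \<and>
     (\<forall>t\<in>{0..T}. \<forall>\<epsilon>>0. \<exists>\<delta>>0. \<forall>s\<in>{0..T}. \<bar>s - t\<bar> < \<delta> \<longrightarrow> W1 (\<mu> s) (\<mu> t) < ennreal \<epsilon>)"

definition A1_coupling :: "(real^'n \<Rightarrow> (real^'n) measure \<Rightarrow> real) \<Rightarrow> bool" where
  "A1_coupling f \<longleftrightarrow>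
     (\<exists>C. \<forall>x m. P1 m \<longrightarrow> \<bar>f x m\<bar> \<le> C) \<and>
     (\<exists>Df D2f C. \<forall>m. P1 m \<longrightarrow>
        continuous_on UNIV (D2f m) \<and>
        (\<forall>x. ((\<lambda>y. f y m) has_derivative blinfun_apply (Df m x)) (at x) \<and>
             (Df m has_derivative blinfun_apply (D2f m x)) (at x) \<and>
             norm (Df m x) \<le> C \<and> norm (D2f m x) \<le> C))"

definition A1 :: "real \<Rightarrow> (real^'n \<Rightarrow> (real^'n) measure \<Rightarrow> real) \<Rightarrow> (real^'n \<Rightarrow> (real^'n) measure \<Rightarrow> real)
    \<Rightarrow> (real \<Rightarrow> real^'r^'n) \<Rightarrow> (real^'n) measure \<Rightarrow> bool" where
  "A1 T F G \<sigma> m0 \<longleftrightarrow> A1_coupling F \<and> A1_coupling G \<and>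
     (\<forall>l. continuous_on {0..T} (\<lambda>t. column l (\<sigma> t))) \<and>
     P1 m0 \<and>
     (\<exists>g C. g \<in> borel_measurable borel \<and> (\<forall>x. 0 \<le> g x \<and> g x \<le> C) \<and>
        bounded {x. g x \<noteq> 0} \<and> m0 = density lborel (\<lambda>x. ennreal (g x)))"

definition emb :: "int^'n \<Rightarrow> real^'n" where
  "emb z = (\<chi> k. real_of_int (z $ k))"

definition gp :: "real \<Rightarrow> int^'n \<Rightarrow> real^'n" where
  "gp \<rho> i = \<rho> *\<^sub>R emb i"

text \<open>A regular triangulation of R^d with vertices in Z^d (it is then scaled by \<rho>):
  a set of nondegenerate simplices (sets of d+1 affinely independent integer points) covering R^d,
  meeting face to face, invariant under integer translations and of uniformly bounded size.\<close>
definition regular_triangulation :: "(int^'n) set set \<Rightarrow> bool" where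
  "regular_triangulation Tri \<longleftrightarrow>
     (\<forall>S\<in>Tri. finite S \<and> card S = CARD('n) + 1 \<and> \<not> affine_dependent (emb ` S)) \<and>
     (\<Union>S\<in>Tri. convex hull (emb ` S)) = UNIV \<and>
     (\<forall>S\<in>Tri. \<forall>S'\<in>Tri. convex hull (emb ` S) \<inter> convex hull (emb ` S') = convex hull (emb ` (S \<inter> S'))) \<and>
     (\<forall>S\<in>Tri. \<forall>z. (\<lambda>v. v + z) ` S \<in> Tri) \<and>
     (\<exists>B. \<forall>S\<in>Tri. \<forall>a\<in>S. \<forall>b\<in>S. norm (emb a - emb b) \<le> B)"

definition barycentric_coords :: "(int^'n) set set \<Rightarrow> (int^'n \<Rightarrow> real^'n \<Rightarrow> real) \<Rightarrow> bool" where
  "barycentric_coords Tri \<phi> \<longleftrightarrow>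
     (\<forall>S\<in>Tri. \<forall>y\<in>convex hull (emb ` S).
        (\<forall>z. z \<notin> S \<longrightarrow> \<phi> z y = 0) \<and> (\<forall>z\<in>S. 0 \<le> \<phi> z y) \<and>
        (\<Sum>z\<in>S. \<phi> z y) = 1 \<and> (\<Sum>z\<in>S. \<phi> z y *\<^sub>R emb z) = y)"

text \<open>\<beta>_i(x) = \<phi> i (x/\<rho>), and I[f](x) = \<Sum>_i f_i \<beta>_i(x) (finitely many nonzero terms).\<close>
definition interp :: "(int^'n \<Rightarrow> real^'n \<Rightarrow> real) \<Rightarrow> real \<Rightarrow> (int^'n \<Rightarrow> real) \<Rightarrow> real^'n \<Rightarrow> real" where
  "interp \<phi> \<rho> f x = (\<Sum>i\<in>{i. \<phi> i ((1/\<rho>) *\<^sub>R x) \<noteq> 0}. f i * \<phi> i ((1/\<rho>) *\<^sub>R x))"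

text \<open>scheme_vals ... m = the grid values v_{.,N-m}.\<close>
fun scheme_vals :: "(int^'n \<Rightarrow> real^'n \<Rightarrow> real) \<Rightarrow> (real^'n \<Rightarrow> (real^'n) measure \<Rightarrow> real)
    \<Rightarrow> (real^'n \<Rightarrow> (real^'n) measure \<Rightarrow> real) \<Rightarrow> (real \<Rightarrow> real^'r^'n) \<Rightarrow> real
    \<Rightarrow> real \<Rightarrow> real \<Rightarrow> nat \<Rightarrow> (real \<Rightarrow> (real^'n) measure) \<Rightarrow> nat \<Rightarrow> (int^'n \<Rightarrow> real)" where
  "scheme_vals \<phi> F G \<sigma> T \<rho> h N \<mu> 0 = (\<lambda>i. G (gp \<rho> i) (\<mu> T))"
| "scheme_vals \<phi> F G \<sigma> T \<rho> h N \<mu> (Suc m) =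
     (\<lambda>i. let tk = real (N - Suc m) * h; w = interp \<phi> \<rho> (scheme_vals \<phi> F G \<sigma> T \<rho> h N \<mu> m) in
        (INF \<alpha>. (1 / (2 * real CARD('r))) *
            (\<Sum>l\<in>(UNIV :: 'r set).
               w (gp \<rho> i - h *\<^sub>R \<alpha> + sqrt (h * real CARD('r)) *\<^sub>R column l (\<sigma> tk))
             + w (gp \<rho> i - h *\<^sub>R \<alpha> - sqrt (h * real CARD('r)) *\<^sub>R column l (\<sigma> tk)))
          + h / 2 * (norm \<alpha>)\<^sup>2 + h * F (gp \<rho> i) (\<mu> tk)))"

definition v_grid where
  "v_grid \<phi> F G \<sigma> T \<rho> h N \<mu> k = scheme_vals \<phi> F G \<sigma> T \<rho> h N \<mu> (N - k)"

definition v_rh where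
  "v_rh \<phi> F G \<sigma> T \<rho> h N \<mu> x t = interp \<phi> \<rho> (v_grid \<phi> F G \<sigma> T \<rho> h N \<mu> (nat \<lfloor>t / h\<rfloor>)) x"

end

theory Submission
  imports Defs
begin

lemma emb_add: "emb (a + b) = emb a + emb b"
  by (simp add: emb_def vec_eq_iff)
lemma emb_uminus: "emb (- a) = - emb a"
  by (simp add: emb_def vec_eq_iff)
lemma emb_diff: "emb (a - b) = emb a - emb b"
  by (simp add: emb_def vec_eq_iff)
lemma inj_emb: "inj emb"
  by (auto simp: inj_def emb_def vec_eq_iff)
lemma gp_add: "gp \<rho> (a + b) = gp \<rho> a + gp \<rho> b"
  by (simp add: gp_def emb_add scaleR_add_right)
lemma gp_diff: "gp \<rho> (a - b) = gp \<rho> a - gp \<rho> b"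
  by (simp add: gp_def emb_diff scaleR_diff_right)
lemma gp_uminus: "gp \<rho> (- a) = - gp \<rho> a"
  by (simp add: gp_def emb_uminus)

lemma interp_scale: "interp \<phi> \<rho> w x = interp \<phi> 1 w ((1/\<rho>) *\<^sub>R x)"
  by (simp add: interp_def)

lemma interp_diff: "interp \<phi> \<rho> (\<lambda>l. u l - v l) x = interp \<phi> \<rho> u x - interp \<phi> \<rho> v x"
  by (simp add: interp_def left_diff_distrib sum_subtractf)

lemma sum_sd: "(\<Sum>i\<in>A. (u i + v i - 2*w i) * p i) = (\<Sum>i\<in>A. u i * p i) + (\<Sum>i\<in>A. v i * p i) - 2 * (\<Sum>i\<in>A. w i * (p i::real))"
proof -
  have "(\<Sum>i\<in>A. (u i + v i - 2*w i) * p i) = (\<Sum>i\<in>A. (u i * p i + v i * p i) - 2 * (w i * p i))"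
    by (rule sum.cong) (simp_all add: algebra_simps)
  also have "\<dots> = (\<Sum>i\<in>A. u i * p i + v i * p i) - (\<Sum>i\<in>A. 2 * (w i * p i))" by (rule sum_subtractf)
  also have "\<dots> = (\<Sum>i\<in>A. u i * p i) + (\<Sum>i\<in>A. v i * p i) - 2 * (\<Sum>i\<in>A. w i * p i)"
    by (simp only: sum.distrib sum_distrib_left)
  finally show ?thesis .
qed

lemma interp_sd: "interp \<phi> \<rho> (\<lambda>l. u l + v l - 2 * w l) x = interp \<phi> \<rho> u x + interp \<phi> \<rho> v x - 2 * interp \<phi> \<rho> w x"
  unfolding interp_def by (rule sum_sd)

context
  fixes Tri :: "(int^'n) set set" and \<phi> :: "int^'n \<Rightarrow> real^'n \<Rightarrow> real"
  assumes RT: "regular_triangulation Tri" and BC: "barycentric_coords Tri \<phi>"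
begin

lemma RT_unf: "(\<forall>S\<in>Tri. finite S \<and> card S = CARD('n) + 1 \<and> \<not> affine_dependent (emb ` S)) \<and>
     (\<Union>S\<in>Tri. convex hull (emb ` S)) = UNIV \<and>
     (\<forall>S\<in>Tri. \<forall>S'\<in>Tri. convex hull (emb ` S) \<inter> convex hull (emb ` S') = convex hull (emb ` (S \<inter> S'))) \<and>
     (\<forall>S\<in>Tri. \<forall>z. (\<lambda>v. v + z) ` S \<in> Tri) \<and>
     (\<exists>B. \<forall>S\<in>Tri. \<forall>a\<in>S. \<forall>b\<in>S. norm (emb a - emb b) \<le> B)"
  using RT unfolding regular_triangulation_def .

lemmas RT_parts = RT_unf[THEN conjunct1] RT_unf[THEN conjunct2, THEN conjunct1]
  RT_unf[THEN conjunct2, THEN conjunct2, THEN conjunct2, THEN conjunct1]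
  RT_unf[THEN conjunct2, THEN conjunct2, THEN conjunct2, THEN conjunct2]

lemma cover: "\<exists>S\<in>Tri. y \<in> convex hull (emb ` S)"
proof -
  have "y \<in> (\<Union>S\<in>Tri. convex hull (emb ` S))" using RT_parts(2) by (rule ssubst) (rule UNIV_I)
  then show ?thesis by (rule UN_E) (rule bexI)
qed

lemma tri_fin: "S \<in> Tri \<Longrightarrow> finite S"
  using RT_parts(1) by (meson bspec)

lemma tri_card: "S \<in> Tri \<Longrightarrow> card S = CARD('n) + 1"
  using RT_parts(1) by (meson bspec)

lemma tri_indep: "S \<in> Tri \<Longrightarrow> \<not> affine_dependent (emb ` S)"
  using RT_parts(1) by (meson bspec)

lemma tri_trans: "S \<in> Tri \<Longrightarrow> (\<lambda>v. v + z) ` S \<in> Tri"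
  using RT_parts(3) by (meson bspec spec)

lemma bc_all: "S \<in> Tri \<Longrightarrow> y \<in> convex hull (emb ` S) \<Longrightarrow>
        (\<forall>z. z \<notin> S \<longrightarrow> \<phi> z y = 0) \<and> (\<forall>z\<in>S. 0 \<le> \<phi> z y) \<and>
        (\<Sum>z\<in>S. \<phi> z y) = 1 \<and> (\<Sum>z\<in>S. \<phi> z y *\<^sub>R emb z) = y"
  using BC unfolding barycentric_coords_def by (meson bspec)

lemma bc:
  assumes "S \<in> Tri" "y \<in> convex hull (emb ` S)"
  shows "\<And>z. z \<notin> S \<Longrightarrow> \<phi> z y = 0" "\<And>z. z \<in> S \<Longrightarrow> 0 \<le> \<phi> z y"
    "(\<Sum>z\<in>S. \<phi> z y) = 1" "(\<Sum>z\<in>S. \<phi> z y *\<^sub>R emb z) = y"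
  using bc_all[OF assms] by blast+

lemma bary_unique:
  assumes S: "S \<in> Tri" and s1: "sum c1 S = 1" and s2: "sum c2 S = 1"
    and e: "(\<Sum>z\<in>S. c1 z *\<^sub>R emb z) = (\<Sum>z\<in>S. c2 z *\<^sub>R emb z)" and z: "z \<in> S"
  shows "c1 z = c2 z"
proof -
  have fin: "finite S" using tri_fin S .
  define U where "U e = c1 (inv emb e) - c2 (inv emb e)" for e
  have ij: "inj_on emb S" by (rule inj_on_subset[OF inj_emb]) simp
  have Uemb: "\<And>z. U (emb z) = c1 z - c2 z"
    unfolding U_def by (simp only: inv_f_f[OF inj_emb])
  have "sum U (emb ` S) = sum (U \<circ> emb) S" by (rule sum.reindex[OF ij])
  also have "\<dots> = (\<Sum>z\<in>S. c1 z - c2 z)" by (simp only: o_def Uemb)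
  also have "\<dots> = 0" using s1 s2 by (simp add: sum_subtractf)
  finally have a: "sum U (emb ` S) = 0" .
  have "(\<Sum>v\<in>emb ` S. U v *\<^sub>R v) = (\<Sum>z\<in>S. U (emb z) *\<^sub>R emb z)"
    using sum.reindex[OF ij, of "\<lambda>v. U v *\<^sub>R v"] by (simp only: o_def)
  also have "\<dots> = (\<Sum>z\<in>S. (c1 z - c2 z) *\<^sub>R emb z)" by (simp only: Uemb)
  also have "\<dots> = (\<Sum>z\<in>S. c1 z *\<^sub>R emb z) - (\<Sum>z\<in>S. c2 z *\<^sub>R emb z)"
    by (simp only: scaleR_diff_left sum_subtractf)
  also have "\<dots> = 0" by (simp only: e diff_self)
  finally have b: "(\<Sum>v\<in>emb ` S. U v *\<^sub>R v) = 0" .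
  have nd: "\<not> (\<exists>U. sum U (emb ` S) = 0 \<and> (\<exists>v\<in>emb ` S. U v \<noteq> 0) \<and> (\<Sum>v\<in>emb ` S. U v *\<^sub>R v) = 0)"
    using tri_indep[OF S] unfolding affine_dependent_explicit_finite[OF finite_imageI[OF fin]] .
  have "\<forall>v\<in>emb ` S. U v = 0"
  proof (rule ccontr)
    assume "\<not> (\<forall>v\<in>emb ` S. U v = 0)"
    then have "\<exists>v\<in>emb ` S. U v \<noteq> 0" by blast
    with a b have "\<exists>U. sum U (emb ` S) = 0 \<and> (\<exists>v\<in>emb ` S. U v \<noteq> 0) \<and> (\<Sum>v\<in>emb ` S. U v *\<^sub>R v) = 0"
      by blast
    with nd show False by contradiction
  qed
  then have "U (emb z) = 0" using z by blast
  then show ?thesis by (simp only: Uemb)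
qed

lemma hull_trans: "y \<in> convex hull (emb ` S) \<Longrightarrow> y + emb m \<in> convex hull (emb ` ((\<lambda>v. v + m) ` S))"
proof -
  assume y: "y \<in> convex hull (emb ` S)"
  have eq: "emb ` ((\<lambda>v. v + m) ` S) = (\<lambda>x. emb m + x) ` (emb ` S)"
    by (auto simp: image_image emb_add add.commute)
  have h: "convex hull ((\<lambda>x. emb m + x) ` (emb ` S)) = (\<lambda>x. emb m + x) ` (convex hull (emb ` S))"
    by (rule convex_hull_translation)
  have "emb m + y \<in> (\<lambda>x. emb m + x) ` (convex hull (emb ` S))" using y by blast
  then have "emb m + y \<in> convex hull (emb ` ((\<lambda>v. v + m) ` S))" unfolding eq h .
  then show ?thesis by (simp add: add.commute)
qed

lemma phi_trans: "\<phi> (z + m) (y + emb m) = \<phi> z y"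
proof -
  obtain S where S: "S \<in> Tri" "y \<in> convex hull (emb ` S)" using cover by blast
  define S' where "S' = (\<lambda>v. v + m) ` S"
  have S': "S' \<in> Tri" "y + emb m \<in> convex hull (emb ` S')"
    using tri_trans[OF S(1)] hull_trans[OF S(2)] by (auto simp: S'_def)
  have ij: "inj_on (\<lambda>v. v + m) S" by (auto simp: inj_on_def)
  show ?thesis
  proof (cases "z \<in> S")
    case False
    then have "z + m \<notin> S'" by (auto simp: S'_def)
    then show ?thesis using bc(1)[OF S'] bc(1)[OF S False] by simp
  next
    case True
    define c2 where "c2 z = \<phi> (z + m) (y + emb m)" for z
    have "sum c2 S = (\<Sum>z\<in>S'. \<phi> z (y + emb m))"
      by (simp add: S'_def sum.reindex[OF ij] c2_def)
    then have s2: "sum c2 S = 1" using bc(3)[OF S'] by simp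
    have "(\<Sum>z\<in>S. c2 z *\<^sub>R emb z) = (\<Sum>z\<in>S. c2 z *\<^sub>R emb (z + m)) - (\<Sum>z\<in>S. c2 z *\<^sub>R emb m)"
      by (simp add: emb_add scaleR_add_right sum.distrib)
    also have "(\<Sum>z\<in>S. c2 z *\<^sub>R emb (z + m)) = (\<Sum>z\<in>S'. \<phi> z (y + emb m) *\<^sub>R emb z)"
      by (simp add: S'_def sum.reindex[OF ij] c2_def)
    also have "\<dots> = y + emb m" using bc(4)[OF S'] .
    also have "(\<Sum>z\<in>S. c2 z *\<^sub>R emb m) = emb m" using s2 by (simp add: scaleR_sum_left[symmetric])
    finally have e2: "(\<Sum>z\<in>S. c2 z *\<^sub>R emb z) = y" by simp
    have "\<phi> z y = c2 z"
      by (rule bary_unique[OF S(1) bc(3)[OF S] s2 _ True]) (simp add: bc(4)[OF S] e2)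
    then show ?thesis by (simp add: c2_def)
  qed
qed

lemma J_S:
  assumes "S \<in> Tri" "y \<in> convex hull (emb ` S)"
  shows "interp \<phi> 1 w y = (\<Sum>z\<in>S. w z * \<phi> z y)"
proof -
  have sub: "{i. \<phi> i y \<noteq> 0} \<subseteq> S" using bc(1)[OF assms] by blast
  show ?thesis unfolding interp_def
    by (simp, rule sum.mono_neutral_left[OF tri_fin[OF assms(1)] sub]) auto
qed

lemma J_le:
  assumes "\<And>l. w l \<le> D"
  shows "interp \<phi> \<rho> w x \<le> D"
proof -
  obtain S where S: "S \<in> Tri" "(1/\<rho>) *\<^sub>R x \<in> convex hull (emb ` S)" using cover by blast
  have "interp \<phi> \<rho> w x = (\<Sum>z\<in>S. w z * \<phi> z ((1/\<rho>) *\<^sub>R x))"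
    using J_S[OF S] interp_scale by metis
  also have "\<dots> \<le> (\<Sum>z\<in>S. D * \<phi> z ((1/\<rho>) *\<^sub>R x))"
    by (rule sum_mono, rule mult_right_mono[OF assms bc(2)[OF S]])
  also have "\<dots> = D" using bc(3)[OF S] by (simp add: sum_distrib_left[symmetric])
  finally show ?thesis .
qed

lemma J_ge:
  assumes "\<And>l. D \<le> w l"
  shows "D \<le> interp \<phi> \<rho> w x"
proof -
  have "interp \<phi> \<rho> (\<lambda>l. 0 - w l) x \<le> - D" by (rule J_le) (use assms in auto)
  moreover have "interp \<phi> \<rho> (\<lambda>l. 0) x = 0" by (simp add: interp_def)
  ultimately show ?thesis using interp_diff[of \<phi> \<rho> "\<lambda>l. 0" w x] by simp
qed

lemma J_trans: "interp \<phi> 1 w (y + emb m) = interp \<phi> 1 (\<lambda>l. w (l + m)) y"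
proof -
  obtain S where S: "S \<in> Tri" "y \<in> convex hull (emb ` S)" using cover by blast
  define S' where "S' = (\<lambda>v. v + m) ` S"
  have S': "S' \<in> Tri" "y + emb m \<in> convex hull (emb ` S')"
    using tri_trans[OF S(1)] hull_trans[OF S(2)] by (auto simp: S'_def)
  have ij: "inj_on (\<lambda>v. v + m) S" by (auto simp: inj_on_def)
  have "interp \<phi> 1 w (y + emb m) = (\<Sum>z\<in>S'. w z * \<phi> z (y + emb m))" using J_S[OF S'] .
  also have "\<dots> = (\<Sum>z\<in>S. w (z + m) * \<phi> z y)"
    by (simp add: S'_def sum.reindex[OF ij] phi_trans)
  also have "\<dots> = interp \<phi> 1 (\<lambda>l. w (l + m)) y" using J_S[OF S] by simp
  finally show ?thesis .
qed

lemma interp_trans: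
  assumes "\<rho> > 0"
  shows "interp \<phi> \<rho> w (x + gp \<rho> m) = interp \<phi> \<rho> (\<lambda>l. w (l + m)) x"
proof -
  have "(1/\<rho>) *\<^sub>R (x + gp \<rho> m) = (1/\<rho>) *\<^sub>R x + emb m"
    using assms by (simp add: gp_def scaleR_add_right)
  then show ?thesis using J_trans interp_scale by metis
qed

end

lemma finite_ball_int: "finite {z::int^'n. norm (emb z) \<le> R}"
proof -
  define A where "A = {-\<lceil>R\<rceil>..\<lceil>R\<rceil>}"
  have "{z::int^'n. norm (emb z) \<le> R} \<subseteq> (\<lambda>f. vec_lambda f) ` (PiE UNIV (\<lambda>_. A))"
  proof
    fix z :: "int^'n" assume "z \<in> {z. norm (emb z) \<le> R}"
    then have n: "norm (emb z) \<le> R" by simp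
    have allk: "\<forall>k. z $ k \<in> A"
    proof
      fix k
      have "\<bar>emb z $ k\<bar> \<le> norm (emb z)" by (rule component_le_norm_cart)
      then have "\<bar>real_of_int (z $ k)\<bar> \<le> R" using n by (simp add: emb_def)
      then have "\<bar>z $ k\<bar> \<le> \<lceil>R\<rceil>" by linarith
      then show "z $ k \<in> A" by (simp add: A_def abs_le_iff)
    qed
    have "vec_nth z \<in> PiE UNIV (\<lambda>_. A)" unfolding PiE_UNIV_domain Pi_def using allk by blast
    moreover have "z = vec_lambda (vec_nth z)" by simp
    ultimately show "z \<in> (\<lambda>f. vec_lambda f) ` (PiE UNIV (\<lambda>_. A))" by blast
  qed
  moreover have "finite (PiE (UNIV::'n set) (\<lambda>_. A))"
    by (rule finite_PiE) (simp_all add: A_def)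
  ultimately show ?thesis by (meson finite_imageI finite_subset)
qed

context
  fixes Tri :: "(int^'n) set set" and \<phi> :: "int^'n \<Rightarrow> real^'n \<Rightarrow> real"
  assumes RT: "regular_triangulation Tri" and BC: "barycentric_coords Tri \<phi>"
begin

lemma vert_bound: "\<exists>B\<ge>0. \<forall>S\<in>Tri. \<forall>a\<in>S. \<forall>b\<in>S. norm (emb a - emb b) \<le> B"
proof -
  obtain B where B: "\<forall>S\<in>Tri. \<forall>a\<in>S. \<forall>b\<in>S. norm (emb a - emb b) \<le> B"
    using RT_parts(4)[OF RT BC] by blast
  have "\<forall>S\<in>Tri. \<forall>a\<in>S. \<forall>b\<in>S. norm (emb a - emb b) \<le> max B 0"
    using B by (meson max.coboundedI1)
  then show ?thesis by (intro exI[of _ "max B 0"]) simp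
qed

lemma hull_near:
  assumes "y \<in> convex hull (emb ` S)" "z \<in> S" "\<forall>a\<in>S. \<forall>b\<in>S. norm (emb a - emb b) \<le> B"
  shows "norm (y - emb z) \<le> B"
proof -
  have "emb ` S \<subseteq> cball (emb z) B"
  proof
    fix e assume "e \<in> emb ` S"
    then obtain a where a: "a \<in> S" "e = emb a" by blast
    have "norm (emb z - emb a) \<le> B" using assms(2,3) a(1) by blast
    then show "e \<in> cball (emb z) B" using a(2) by (simp add: dist_norm)
  qed
  then have "convex hull (emb ` S) \<subseteq> cball (emb z) B" by (rule hull_minimal) (rule convex_cball)
  then have "dist (emb z) y \<le> B" using assms(1) by auto
  then show ?thesis by (simp add: dist_norm norm_minus_commute)
qed

lemma hull_nonempty: "y \<in> convex hull (emb ` S) \<Longrightarrow> S \<noteq> {}"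
  by auto

lemma finite_tri_near: "finite {S\<in>Tri. \<exists>y\<in>convex hull (emb ` S). norm y \<le> R}"
proof -
  obtain B where B: "B \<ge> 0" "\<forall>S\<in>Tri. \<forall>a\<in>S. \<forall>b\<in>S. norm (emb a - emb b) \<le> B"
    using vert_bound by blast
  have "{S\<in>Tri. \<exists>y\<in>convex hull (emb ` S). norm y \<le> R} \<subseteq> Pow {z. norm (emb z) \<le> R + B}"
  proof
    fix S assume "S \<in> {S\<in>Tri. \<exists>y\<in>convex hull (emb ` S). norm y \<le> R}"
    then obtain y where S: "S \<in> Tri" "y \<in> convex hull (emb ` S)" "norm y \<le> R" by blast
    have "\<forall>z\<in>S. norm (emb z) \<le> R + B"
    proof
      fix z assume z: "z \<in> S"
      have "norm (y - emb z) \<le> B" using hull_near[OF S(2) z] B(2) S(1) by blast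
      moreover have "norm (emb z) \<le> norm y + norm (y - emb z)"
        by (metis add_diff_cancel_left' diff_add_cancel norm_triangle_ineq4 norm_minus_commute add.commute)
      ultimately show "norm (emb z) \<le> R + B" using S(3) by linarith
    qed
    then show "S \<in> Pow {z. norm (emb z) \<le> R + B}" by blast
  qed
  moreover have "finite (Pow {z::int^'n. norm (emb z) \<le> R + B})"
    using finite_ball_int by blast
  ultimately show ?thesis by (rule finite_subset)
qed


lemma simplex_lip:
  assumes S: "S \<in> Tri"
  shows "\<exists>K\<ge>0. \<forall>z\<in>S. \<forall>y\<in>convex hull (emb ` S). \<forall>y'\<in>convex hull (emb ` S).
            \<bar>\<phi> z y - \<phi> z y'\<bar> \<le> K * norm (y - y')"
proof (cases "S = {}")
  case True then show ?thesis by (intro exI[of _ 0]) simp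
next
  case False
  then obtain z0 where z0: "z0 \<in> S" by blast
  define S0 where "S0 = S - {z0}"
  define v where "v z = emb z - emb z0" for z
  define Bs where "Bs = v ` S0"
  have fin: "finite S" using tri_fin[OF RT BC S] .
  have fin0: "finite S0" using fin by (simp add: S0_def)
  have injv: "inj_on v S0" unfolding inj_on_def v_def
  proof (intro ballI impI)
    fix x y assume "emb x - emb z0 = emb y - emb z0"
    then have "emb x = emb y" by simp
    then show "x = y" using inj_emb by (rule injD[rotated])
  qed
  have ins: "emb ` S = insert (emb z0) (emb ` S0)" using z0 by (auto simp: S0_def)
  have nin: "emb z0 \<notin> emb ` S0" by (auto simp: S0_def dest: injD[OF inj_emb])
  have "\<not> dependent ((\<lambda>x. - emb z0 + x) ` emb ` S0)"
    using tri_indep[OF RT BC S] unfolding ins affine_dependent_iff_dependent[OF nin] .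
  moreover have "(\<lambda>x. - emb z0 + x) ` emb ` S0 = Bs"
    unfolding Bs_def image_image v_def by (rule image_cong[OF refl]) simp
  ultimately have ind: "independent Bs" by simp
  have "\<forall>z\<in>S0. \<exists>g Bz. linear g \<and> (\<forall>x\<in>Bs. g x = (if x = v z then 1 else (0::real))) \<and> (\<forall>x. norm (g x) \<le> Bz * norm x)"
  proof
    fix z assume "z \<in> S0"
    obtain g where g: "linear g" "\<forall>x\<in>Bs. g x = (if x = v z then 1 else (0::real))"
      using linear_independent_extend[OF ind, of "\<lambda>x. if x = v z then 1 else 0"] by blast
    obtain Bz where "\<forall>x. norm (g x) \<le> Bz * norm x" using linear_bounded[OF g(1)] by blast
    then show "\<exists>g Bz. linear g \<and> (\<forall>x\<in>Bs. g x = (if x = v z then 1 else (0::real))) \<and> (\<forall>x. norm (g x) \<le> Bz * norm x)"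
      using g by blast
  qed
  then obtain g Bf where gB: "\<forall>z\<in>S0. linear (g z) \<and> (\<forall>x\<in>Bs. g z x = (if x = v z then 1 else (0::real))) \<and> (\<forall>x. norm (g z x) \<le> Bf z * norm x)"
    by metis
  define K where "K = (\<Sum>z\<in>S0. \<bar>Bf z\<bar>)"
  have K0: "K \<ge> 0" unfolding K_def by (rule sum_nonneg) simp
  have key: "\<bar>\<phi> z y - \<phi> z y'\<bar> \<le> K * norm (y - y')"
    if z: "z \<in> S" and y: "y \<in> convex hull (emb ` S)" and y': "y' \<in> convex hull (emb ` S)" for z y y'
  proof -
    define d where "d z = \<phi> z y - \<phi> z y'" for z
    have sd: "sum d S = 0" unfolding d_def sum_subtractf using bc(3)[OF RT BC S y] bc(3)[OF RT BC S y'] by simp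
    have "(\<Sum>z'\<in>S. d z' *\<^sub>R v z') = (\<Sum>z'\<in>S. d z' *\<^sub>R emb z') - (\<Sum>z'\<in>S. d z' *\<^sub>R emb z0)"
      unfolding v_def scaleR_diff_right by (rule sum_subtractf)
    also have "(\<Sum>z'\<in>S. d z' *\<^sub>R emb z') = (\<Sum>z'\<in>S. \<phi> z' y *\<^sub>R emb z') - (\<Sum>z'\<in>S. \<phi> z' y' *\<^sub>R emb z')"
      unfolding d_def scaleR_diff_left by (rule sum_subtractf)
    also have "\<dots> = y - y'" using bc(4)[OF RT BC S y] bc(4)[OF RT BC S y'] by simp
    also have "(\<Sum>z'\<in>S. d z' *\<^sub>R emb z0) = 0" unfolding scaleR_sum_left[symmetric] sd by simp
    finally have sv: "(\<Sum>z'\<in>S. d z' *\<^sub>R v z') = y - y'" by simp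
    have "(\<Sum>z'\<in>S. d z' *\<^sub>R v z') = d z0 *\<^sub>R v z0 + (\<Sum>z'\<in>S0. d z' *\<^sub>R v z')"
      unfolding S0_def by (rule sum.remove[OF fin z0])
    then have sv0: "(\<Sum>z'\<in>S0. d z' *\<^sub>R v z') = y - y'" using sv by (simp add: v_def)
    have dz0: "d z0 = - (\<Sum>z'\<in>S0. d z')"
      using sd sum.remove[OF fin z0, of d] by (simp add: S0_def)
    have gval: "d z1 = g z1 (y - y')" if z1: "z1 \<in> S0" for z1
    proof -
      have lin: "linear (g z1)" using gB z1 by blast
      have gv: "g z1 (v z') = (if z' = z1 then 1 else 0)" if "z' \<in> S0" for z'
      proof -
        have "v z' \<in> Bs" using that by (simp add: Bs_def)
        then have "g z1 (v z') = (if v z' = v z1 then 1 else 0)" using gB z1 by blast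
        moreover have "(v z' = v z1) = (z' = z1)" using inj_on_eq_iff[OF injv that z1] .
        ultimately show ?thesis by simp
      qed
      have "g z1 (y - y') = (\<Sum>z'\<in>S0. g z1 (d z' *\<^sub>R v z'))"
        unfolding sv0[symmetric] by (rule linear_sum[OF lin])
      also have "\<dots> = (\<Sum>z'\<in>S0. d z' * g z1 (v z'))"
        by (rule sum.cong[OF refl]) (simp add: linear_scale[OF lin])
      also have "\<dots> = (\<Sum>z'\<in>S0. if z' = z1 then d z' else 0)"
        by (rule sum.cong[OF refl]) (simp add: gv)
      also have "\<dots> = d z1" using sum.delta'[OF fin0, of z1 d] z1 by (simp add: eq_commute)
      finally show ?thesis by simp
    qed
    have bnd: "\<bar>d z1\<bar> \<le> \<bar>Bf z1\<bar> * norm (y - y')" if z1: "z1 \<in> S0" for z1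
    proof -
      have "\<bar>d z1\<bar> = norm (g z1 (y - y'))" using gval[OF z1] by simp
      also have "\<dots> \<le> Bf z1 * norm (y - y')" using gB z1 by blast
      also have "\<dots> \<le> \<bar>Bf z1\<bar> * norm (y - y')" by (rule mult_right_mono) simp_all
      finally show ?thesis .
    qed
    have sumb: "(\<Sum>z'\<in>S0. \<bar>d z'\<bar>) \<le> K * norm (y - y')"
    proof -
      have "(\<Sum>z'\<in>S0. \<bar>d z'\<bar>) \<le> (\<Sum>z'\<in>S0. \<bar>Bf z'\<bar> * norm (y - y'))"
        by (rule sum_mono) (rule bnd)
      also have "\<dots> = K * norm (y - y')" unfolding K_def by (rule sum_distrib_right[symmetric])
      finally show ?thesis .
    qed
    show ?thesis
    proof (cases "z = z0")
      case True
      have "\<bar>d z0\<bar> = \<bar>\<Sum>z'\<in>S0. d z'\<bar>" using dz0 by simp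
      also have "\<dots> \<le> (\<Sum>z'\<in>S0. \<bar>d z'\<bar>)" by (rule sum_abs)
      finally show ?thesis using sumb True by (simp add: d_def)
    next
      case False
      then have z1: "z \<in> S0" using z by (simp add: S0_def)
      have "\<bar>Bf z\<bar> \<le> K" unfolding K_def
        by (rule member_le_sum[OF z1 _ fin0]) simp
      then have "\<bar>Bf z\<bar> * norm (y - y') \<le> K * norm (y - y')" by (rule mult_right_mono) simp
      then show ?thesis using bnd[OF z1] by (simp add: d_def)
    qed
  qed
  show ?thesis using K0 key by blast
qed

lemma uniform_lip: "\<exists>K\<ge>0. \<forall>S\<in>Tri. \<forall>z\<in>S. \<forall>y\<in>convex hull (emb ` S). \<forall>y'\<in>convex hull (emb ` S).
            \<bar>\<phi> z y - \<phi> z y'\<bar> \<le> K * norm (y - y')"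
proof -
  obtain B where B: "B \<ge> 0" "\<forall>S\<in>Tri. \<forall>a\<in>S. \<forall>b\<in>S. norm (emb a - emb b) \<le> B"
    using vert_bound by blast
  define T0 where "T0 = {S\<in>Tri. 0 \<in> S}"
  have "T0 \<subseteq> Pow {z. norm (emb z) \<le> B}"
  proof
    fix S assume "S \<in> T0"
    then have S: "S \<in> Tri" "0 \<in> S" by (auto simp: T0_def)
    have "\<forall>a\<in>S. norm (emb a - emb 0) \<le> B" using B(2) S by blast
    moreover have "emb 0 = 0" by (simp add: emb_def vec_eq_iff)
    ultimately have "\<forall>a\<in>S. norm (emb a) \<le> B" by (metis diff_zero)
    then show "S \<in> Pow {z. norm (emb z) \<le> B}" by blast
  qed
  then have finT: "finite T0" by (rule finite_subset) (simp add: finite_ball_int)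
  have "\<forall>S\<in>T0. \<exists>K\<ge>0. \<forall>z\<in>S. \<forall>y\<in>convex hull (emb ` S). \<forall>y'\<in>convex hull (emb ` S).
            \<bar>\<phi> z y - \<phi> z y'\<bar> \<le> K * norm (y - y')"
    using simplex_lip by (auto simp: T0_def)
  then obtain Kf where Kf: "\<forall>S\<in>T0. Kf S \<ge> 0 \<and> (\<forall>z\<in>S. \<forall>y\<in>convex hull (emb ` S). \<forall>y'\<in>convex hull (emb ` S).
            \<bar>\<phi> z y - \<phi> z y'\<bar> \<le> Kf S * norm (y - y'))"
    by metis
  define K where "K = (\<Sum>S\<in>T0. Kf S)"
  have K0: "K \<ge> 0" unfolding K_def using Kf by (simp add: sum_nonneg)
  have "\<bar>\<phi> z y - \<phi> z y'\<bar> \<le> K * norm (y - y')"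
    if S: "S \<in> Tri" and z: "z \<in> S" and y: "y \<in> convex hull (emb ` S)" and y': "y' \<in> convex hull (emb ` S)" for S z y y'
  proof -
    define S' where "S' = (\<lambda>v. v + (- z)) ` S"
    have t: "S' \<in> Tri" unfolding S'_def by (rule tri_trans[OF RT BC S])
    have "0 \<in> S'" unfolding S'_def using z by (rule rev_image_eqI) simp
    then have S'T: "S' \<in> T0" by (simp add: T0_def t)
    have yy: "y + emb (- z) \<in> convex hull (emb ` S')" "y' + emb (- z) \<in> convex hull (emb ` S')"
      unfolding S'_def by (rule hull_trans[OF RT BC y], rule hull_trans[OF RT BC y'])
    have zz: "z + (- z) \<in> S'" using z by (simp add: S'_def)
    have "\<bar>\<phi> z y - \<phi> z y'\<bar> = \<bar>\<phi> (z + (- z)) (y + emb (- z)) - \<phi> (z + (- z)) (y' + emb (- z))\<bar>"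
      by (simp only: phi_trans[OF RT BC])
    also have "\<dots> \<le> Kf S' * norm ((y + emb (- z)) - (y' + emb (- z)))"
      using Kf S'T zz yy by blast
    also have "\<dots> = Kf S' * norm (y - y')" by simp
    also have "\<dots> \<le> K * norm (y - y')"
    proof (rule mult_right_mono)
      show "Kf S' \<le> K" unfolding K_def by (rule member_le_sum[OF S'T _ finT]) (use Kf in blast)
    qed simp
    finally show ?thesis .
  qed
  then show ?thesis using K0 by blast
qed


lemma J_lip_ex: "\<exists>C\<ge>0. \<forall>w M x y. M \<ge> 0 \<longrightarrow> (\<forall>a b. \<bar>w a - w b\<bar> \<le> M * norm (emb a - emb b)) \<longrightarrow>
    \<bar>interp \<phi> 1 w x - interp \<phi> 1 w y\<bar> \<le> C * M * norm (x - y)"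
proof -
  obtain K where K: "K \<ge> 0" "\<forall>S\<in>Tri. \<forall>z\<in>S. \<forall>y\<in>convex hull (emb ` S). \<forall>y'\<in>convex hull (emb ` S).
            \<bar>\<phi> z y - \<phi> z y'\<bar> \<le> K * norm (y - y')"
    using uniform_lip by blast
  obtain B where B: "B \<ge> 0" "\<forall>S\<in>Tri. \<forall>a\<in>S. \<forall>b\<in>S. norm (emb a - emb b) \<le> B"
    using vert_bound by blast
  define C where "C = real (CARD('n) + 1) * B * K"
  have C0: "C \<ge> 0" unfolding C_def using B(1) K(1) by simp
  have simp_lip: "\<bar>interp \<phi> 1 w p - interp \<phi> 1 w q\<bar> \<le> C * M * norm (p - q)"
    if M0: "M \<ge> 0" and wM: "\<forall>a b. \<bar>w a - w b\<bar> \<le> M * norm (emb a - emb b)"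
      and S: "S \<in> Tri" and p: "p \<in> convex hull (emb ` S)" and q: "q \<in> convex hull (emb ` S)" for w M S p q
  proof -
    obtain z0 where z0: "z0 \<in> S" using p by (metis all_not_in_conv convex_hull_empty image_empty)
    have fin: "finite S" using tri_fin[OF RT BC S] .
    have e1: "(\<Sum>z\<in>S. (w z - w z0) * (\<phi> z p - \<phi> z q))
        = (\<Sum>z\<in>S. (w z * \<phi> z p - w z * \<phi> z q) - w z0 * (\<phi> z p - \<phi> z q))"
      by (rule sum.cong[OF refl]) (simp add: algebra_simps)
    also have "\<dots> = (\<Sum>z\<in>S. w z * \<phi> z p - w z * \<phi> z q) - (\<Sum>z\<in>S. w z0 * (\<phi> z p - \<phi> z q))"
      by (rule sum_subtractf)
    also have "(\<Sum>z\<in>S. w z0 * (\<phi> z p - \<phi> z q)) = w z0 * ((\<Sum>z\<in>S. \<phi> z p) - (\<Sum>z\<in>S. \<phi> z q))"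
      by (simp only: sum_distrib_left[symmetric] sum_subtractf)
    also have "\<dots> = 0" using bc(3)[OF RT BC S p] bc(3)[OF RT BC S q] by simp
    also have "(\<Sum>z\<in>S. w z * \<phi> z p - w z * \<phi> z q) = interp \<phi> 1 w p - interp \<phi> 1 w q"
      using J_S[OF RT BC S p, of w] J_S[OF RT BC S q, of w] by (simp add: sum_subtractf)
    finally have eq: "interp \<phi> 1 w p - interp \<phi> 1 w q = (\<Sum>z\<in>S. (w z - w z0) * (\<phi> z p - \<phi> z q))" by simp
    have "\<bar>\<Sum>z\<in>S. (w z - w z0) * (\<phi> z p - \<phi> z q)\<bar> \<le> (\<Sum>z\<in>S. \<bar>(w z - w z0) * (\<phi> z p - \<phi> z q)\<bar>)"
      by (rule sum_abs)
    also have "\<dots> \<le> (\<Sum>z\<in>S. (M * B) * (K * norm (p - q)))"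
    proof (rule sum_mono)
      fix z assume z: "z \<in> S"
      have a: "\<bar>w z - w z0\<bar> \<le> M * B"
      proof -
        have "\<bar>w z - w z0\<bar> \<le> M * norm (emb z - emb z0)" using wM by blast
        also have "\<dots> \<le> M * B" using B(2) S z z0 M0 by (simp add: mult_left_mono)
        finally show ?thesis .
      qed
      have b: "\<bar>\<phi> z p - \<phi> z q\<bar> \<le> K * norm (p - q)" using K(2) S z p q by blast
      show "\<bar>(w z - w z0) * (\<phi> z p - \<phi> z q)\<bar> \<le> (M * B) * (K * norm (p - q))"
        unfolding abs_mult by (rule mult_mono[OF a b]) (use M0 B(1) in simp_all)
    qed
    also have "\<dots> = real (card S) * ((M * B) * (K * norm (p - q)))" by simp
    also have "\<dots> = C * M * norm (p - q)" unfolding C_def tri_card[OF RT BC S] by (simp add: algebra_simps)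
    finally show ?thesis using eq by simp
  qed
  have main: "\<bar>interp \<phi> 1 w x - interp \<phi> 1 w y\<bar> \<le> C * M * norm (x - y)"
    if M0: "M \<ge> 0" and wM: "\<forall>a b. \<bar>w a - w b\<bar> \<le> M * norm (emb a - emb b)" for w M x y
  proof -
    define f where "f t = x + t *\<^sub>R (y - x)" for t :: real
    define g where "g t = interp \<phi> 1 w (f t)" for t
    define U where "U S = f -` (convex hull (emb ` S))" for S
    define I where "I = {S\<in>Tri. \<exists>p\<in>convex hull (emb ` S). norm p \<le> norm x + norm y}"
    have finI: "finite I" unfolding I_def by (rule finite_tri_near)
    have cf: "continuous (at t) f" for t unfolding f_def by (intro continuous_intros)
    have lipU: "(C * M * norm (y - x))-lipschitz_on (U S) g" if SI: "S \<in> I" for S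
    proof (rule lipschitz_onI)
      have S: "S \<in> Tri" using SI by (simp add: I_def)
      fix t s assume t: "t \<in> U S" and s: "s \<in> U S"
      have "dist (g t) (g s) \<le> C * M * norm (f t - f s)"
        unfolding g_def dist_real_def by (rule simp_lip[OF M0 wM S]) (use t s in \<open>simp_all add: U_def\<close>)
      also have "f t - f s = (t - s) *\<^sub>R (y - x)" unfolding f_def by (simp add: algebra_simps)
      also have "C * M * norm ((t - s) *\<^sub>R (y - x)) = C * M * norm (y - x) * dist t s"
        by (simp add: dist_real_def)
      finally show "dist (g t) (g s) \<le> C * M * norm (y - x) * dist t s" .
    next
      show "0 \<le> C * M * norm (y - x)" using C0 M0 by simp
    qed
    have closedU: "closed (U S)" if SI: "S \<in> I" for S
    proof -
      have S: "S \<in> Tri" using SI by (simp add: I_def)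
      have "compact (convex hull (emb ` S))"
        by (rule compact_convex_hull[OF finite_imp_compact[OF finite_imageI[OF tri_fin[OF RT BC S]]]])
      then have "closed (convex hull (emb ` S))" by (rule compact_imp_closed)
      then show ?thesis unfolding U_def by (rule continuous_closed_vimage) (rule cf)
    qed
    have cov: "{0..1} \<subseteq> (\<Union>S\<in>I. U S)"
    proof
      fix t :: real assume t: "t \<in> {0..1}"
      obtain S where S: "S \<in> Tri" "f t \<in> convex hull (emb ` S)" using cover[OF RT BC] by blast
      have "f t = (1 - t) *\<^sub>R x + t *\<^sub>R y" unfolding f_def by (simp add: algebra_simps)
      then have "norm (f t) \<le> norm ((1 - t) *\<^sub>R x) + norm (t *\<^sub>R y)" by (metis norm_triangle_ineq)
      also have "\<dots> = (1 - t) * norm x + t * norm y" using t by simp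
      also have "\<dots> \<le> norm x + norm y"
      proof -
        have "(1 - t) * norm x \<le> norm x" using t by (simp add: mult_left_le_one_le)
        moreover have "t * norm y \<le> norm y" using t by (simp add: mult_left_le_one_le)
        ultimately show ?thesis by linarith
      qed
      finally have "S \<in> I" unfolding I_def using S by blast
      moreover have "t \<in> U S" unfolding U_def using S(2) by simp
      ultimately show "t \<in> (\<Union>S\<in>I. U S)" by blast
    qed
    have "(C * M * norm (y - x))-lipschitz_on {0..1} g"
      by (rule lipschitz_on_closed_Union[of I "C * M * norm (y - x)" U g 0 1])
        (use lipU closedU finI cov C0 M0 in auto)
    then have "dist (g 0) (g 1) \<le> C * M * norm (y - x) * dist (0::real) 1"
      by (rule lipschitz_onD) simp_all
    then show ?thesis by (simp add: g_def f_def dist_real_def norm_minus_commute)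
  qed
  show ?thesis using C0 main by blast
qed

lemma interp_lip_ex: "\<exists>C\<ge>0. \<forall>\<rho> w L. \<rho> > 0 \<longrightarrow> L \<ge> 0 \<longrightarrow>
    (\<forall>a b. \<bar>w a - w b\<bar> \<le> L * norm (gp \<rho> a - gp \<rho> b)) \<longrightarrow> (C * L)-lipschitz_on UNIV (interp \<phi> \<rho> w)"
proof -
  obtain C where C: "C \<ge> 0" "\<forall>w M x y. M \<ge> 0 \<longrightarrow> (\<forall>a b. \<bar>w a - w b\<bar> \<le> M * norm (emb a - emb b)) \<longrightarrow>
    \<bar>interp \<phi> 1 w x - interp \<phi> 1 w y\<bar> \<le> C * M * norm (x - y)"
    using J_lip_ex by blast
  have "(C * L)-lipschitz_on UNIV (interp \<phi> \<rho> w)"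
    if r: "\<rho> > 0" and L: "L \<ge> 0" and wL: "\<forall>a b. \<bar>w a - w b\<bar> \<le> L * norm (gp \<rho> a - gp \<rho> b)" for \<rho> w L
  proof (rule lipschitz_onI)
    have ng: "norm (gp \<rho> a - gp \<rho> b) = \<rho> * norm (emb a - emb b)" for a b
      unfolding gp_def scaleR_diff_right[symmetric] using r by simp
    have wM: "\<forall>a b. \<bar>w a - w b\<bar> \<le> (L * \<rho>) * norm (emb a - emb b)"
      using wL by (simp add: ng mult.assoc)
    fix x y :: "real^'n"
    have "dist (interp \<phi> \<rho> w x) (interp \<phi> \<rho> w y) = \<bar>interp \<phi> 1 w ((1/\<rho>) *\<^sub>R x) - interp \<phi> 1 w ((1/\<rho>) *\<^sub>R y)\<bar>"
      by (simp add: dist_real_def interp_scale[of \<phi> \<rho>])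
    also have "\<dots> \<le> C * (L * \<rho>) * norm ((1/\<rho>) *\<^sub>R x - (1/\<rho>) *\<^sub>R y)"
      using C(2) wM r L by simp
    also have "norm ((1/\<rho>) *\<^sub>R x - (1/\<rho>) *\<^sub>R y) = (1/\<rho>) * norm (x - y)"
      unfolding scaleR_diff_right[symmetric] using r by simp
    also have "C * (L * \<rho>) * ((1/\<rho>) * norm (x - y)) = C * L * dist x y"
      using r by (simp add: dist_norm)
    finally show "dist (interp \<phi> \<rho> w x) (interp \<phi> \<rho> w y) \<le> C * L * dist x y" .
  next
    show "0 \<le> C * L" using C(1) L by simp
  qed
  then show ?thesis using C(1) by blast
qed

end

lemma coupling_bounds:
  fixes f :: "real^'n \<Rightarrow> 'm \<Rightarrow> real"
  assumes A: "(\<exists>C. \<forall>x m. P m \<longrightarrow> \<bar>f x m\<bar> \<le> C) \<and>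
     (\<exists>Df D2f C. \<forall>m. P m \<longrightarrow>
        continuous_on UNIV (D2f m) \<and>
        (\<forall>x. ((\<lambda>y. f y m) has_derivative blinfun_apply (Df m x)) (at x) \<and>
             (Df m has_derivative blinfun_apply (D2f m x)) (at x) \<and>
             norm (Df m x) \<le> C \<and> norm (D2f m x) \<le> C))"
  shows "\<exists>C\<ge>0. \<forall>m. P m \<longrightarrow> (\<forall>x. \<bar>f x m\<bar> \<le> C) \<and> (\<forall>x y. \<bar>f x m - f y m\<bar> \<le> C * norm (x - y)) \<and>
            (\<forall>x y. f (x + y) m + f (x - y) m - 2 * f x m \<le> C * (norm y)\<^sup>2)"
proof -
  obtain C0 where C0: "\<forall>x m. P m \<longrightarrow> \<bar>f x m\<bar> \<le> C0" using A by blast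
  obtain Df D2f C1 where H: "\<forall>m. P m \<longrightarrow>
        continuous_on UNIV (D2f m) \<and>
        (\<forall>x. ((\<lambda>y. f y m) has_derivative blinfun_apply (Df m x)) (at x) \<and>
             (Df m has_derivative blinfun_apply (D2f m x)) (at x) \<and>
             norm (Df m x) \<le> C1 \<and> norm (D2f m x) \<le> C1)" using A by blast
  define C where "C = \<bar>C0\<bar> + 2 * \<bar>C1\<bar>"
  have "(\<forall>x. \<bar>f x m\<bar> \<le> C) \<and> (\<forall>x y. \<bar>f x m - f y m\<bar> \<le> C * norm (x - y)) \<and>
            (\<forall>x y. f (x + y) m + f (x - y) m - 2 * f x m \<le> C * (norm y)\<^sup>2)" if Pm: "P m" for m
  proof (intro conjI allI)
    have d1: "\<And>x. ((\<lambda>y. f y m) has_derivative blinfun_apply (Df m x)) (at x)"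
      and d2: "\<And>x. (Df m has_derivative blinfun_apply (D2f m x)) (at x)"
      and n1: "\<And>x. norm (Df m x) \<le> C1" and n2: "\<And>x. norm (D2f m x) \<le> C1"
      using H Pm by blast+
    fix x
    have a: "\<bar>f x m\<bar> \<le> C0" using C0 Pm by blast
    show "\<bar>f x m\<bar> \<le> C" using a abs_ge_self[of C0] abs_ge_zero[of C1] unfolding C_def by linarith
  next
    have d1: "\<And>x. ((\<lambda>y. f y m) has_derivative blinfun_apply (Df m x)) (at x)"
      and n1: "\<And>x. norm (Df m x) \<le> C1"
      using H Pm by blast+
    fix x y
    have "norm (f x m - f y m) \<le> C1 * norm (x - y)"
      by (rule differentiable_bound[of UNIV "\<lambda>y. f y m" "\<lambda>x. blinfun_apply (Df m x)" C1])
        (simp_all add: d1 norm_blinfun.rep_eq[symmetric] n1)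
    also have "\<dots> \<le> C * norm (x - y)" unfolding C_def by (rule mult_right_mono) simp_all
    finally show "\<bar>f x m - f y m\<bar> \<le> C * norm (x - y)" by simp
  next
    have d1: "\<And>x. ((\<lambda>y. f y m) has_derivative blinfun_apply (Df m x)) (at x)"
      and d2: "\<And>x. (Df m has_derivative blinfun_apply (D2f m x)) (at x)"
      and n1: "\<And>x. norm (Df m x) \<le> C1" and n2: "\<And>x. norm (D2f m x) \<le> C1"
      using H Pm by blast+
    have C1pos: "C1 \<ge> 0" using n1[of 0] norm_ge_zero[of "Df m 0"] by linarith
    have dlip: "norm (Df m a - Df m b) \<le> C1 * norm (a - b)" for a b
      by (rule differentiable_bound[of UNIV "Df m" "\<lambda>x. blinfun_apply (D2f m x)" C1])
        (simp_all add: d2 norm_blinfun.rep_eq[symmetric] n2)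
    fix x y
    define h where "h s = f (x + s *\<^sub>R y) m + f (x - s *\<^sub>R y) m" for s :: real
    define h' where "h' s ds = blinfun_apply (Df m (x + s *\<^sub>R y)) (ds *\<^sub>R y) + blinfun_apply (Df m (x - s *\<^sub>R y)) (- (ds *\<^sub>R y))" for s ds :: real
    have hd: "(h has_derivative h' s) (at s within {0..1})" for s
    proof -
      have a1: "((\<lambda>s. x + s *\<^sub>R y) has_derivative (\<lambda>ds. ds *\<^sub>R y)) (at s within {0..1})"
        by (auto intro!: derivative_eq_intros)
      have a2: "((\<lambda>s. x - s *\<^sub>R y) has_derivative (\<lambda>ds. - (ds *\<^sub>R y))) (at s within {0..1})"
        by (auto intro!: derivative_eq_intros)
      have b1: "((\<lambda>s. f (x + s *\<^sub>R y) m) has_derivative (\<lambda>ds. blinfun_apply (Df m (x + s *\<^sub>R y)) (ds *\<^sub>R y))) (at s within {0..1})"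
        using has_derivative_compose[OF a1 d1] .
      have b2: "((\<lambda>s. f (x - s *\<^sub>R y) m) has_derivative (\<lambda>ds. blinfun_apply (Df m (x - s *\<^sub>R y)) (- (ds *\<^sub>R y)))) (at s within {0..1})"
        using has_derivative_compose[OF a2 d1] .
      show ?thesis unfolding h_def h'_def by (rule has_derivative_add[OF b1 b2])
    qed
    obtain \<xi> where xi: "\<xi> \<in> {0<..<1}" "h 1 - h 0 = h' \<xi> (1 - 0)"
      using mvt_simple[of 0 1 h h'] hd by auto
    have "h' \<xi> (1 - 0) = blinfun_apply (Df m (x + \<xi> *\<^sub>R y) - Df m (x - \<xi> *\<^sub>R y)) y"
      by (simp add: h'_def blinfun.minus_right blinfun.diff_left)
    also have "\<dots> \<le> norm (Df m (x + \<xi> *\<^sub>R y) - Df m (x - \<xi> *\<^sub>R y)) * norm y"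
    proof -
      have "\<bar>blinfun_apply (Df m (x + \<xi> *\<^sub>R y) - Df m (x - \<xi> *\<^sub>R y)) y\<bar> \<le> norm (Df m (x + \<xi> *\<^sub>R y) - Df m (x - \<xi> *\<^sub>R y)) * norm y"
        using norm_blinfun[of "Df m (x + \<xi> *\<^sub>R y) - Df m (x - \<xi> *\<^sub>R y)" y] by (simp only: real_norm_def)
      then show ?thesis by linarith
    qed
    also have "\<dots> \<le> (C1 * norm ((x + \<xi> *\<^sub>R y) - (x - \<xi> *\<^sub>R y))) * norm y"
      by (rule mult_right_mono[OF dlip]) simp
    also have "norm ((x + \<xi> *\<^sub>R y) - (x - \<xi> *\<^sub>R y)) = 2 * \<xi> * norm y"
    proof -
      have "(x + \<xi> *\<^sub>R y) - (x - \<xi> *\<^sub>R y) = \<xi> *\<^sub>R y + \<xi> *\<^sub>R y" by simp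
      also have "\<dots> = (2 * \<xi>) *\<^sub>R y" by (simp only: scaleR_add_left[symmetric] mult_2)
      finally have "(x + \<xi> *\<^sub>R y) - (x - \<xi> *\<^sub>R y) = (2 * \<xi>) *\<^sub>R y" .
      then show ?thesis using xi(1) by simp
    qed
    also have "C1 * (2 * \<xi> * norm y) * norm y \<le> C * (norm y)\<^sup>2"
    proof -
      have "C1 * (2 * \<xi> * norm y) * norm y = (2 * C1 * \<xi>) * (norm y)\<^sup>2" by (simp add: power2_eq_square)
      also have "\<dots> \<le> (2 * C1) * (norm y)\<^sup>2"
        using xi(1) C1pos by (intro mult_right_mono) (simp_all add: mult_right_le_one_le)
      also have "\<dots> \<le> C * (norm y)\<^sup>2" unfolding C_def using C1pos by (intro mult_right_mono) simp_all
      finally show ?thesis .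
    qed
    finally have "h 1 - h 0 \<le> C * (norm y)\<^sup>2" using xi(2) by simp
    then show "f (x + y) m + f (x - y) m - 2 * f x m \<le> C * (norm y)\<^sup>2" by (simp add: h_def)
  qed
  moreover have "C \<ge> 0" unfolding C_def by simp
  ultimately show ?thesis by blast
qed


lemma INF_shift:
  fixes f g :: "'a \<Rightarrow> real"
  assumes "bdd_below (range f)" "\<And>\<alpha>. f \<alpha> \<le> g \<alpha> + D"
  shows "(INF \<alpha>. f \<alpha>) \<le> (INF \<alpha>. g \<alpha>) + D"
proof -
  have "(INF \<alpha>. f \<alpha>) - D \<le> (INF \<alpha>. g \<alpha>)"
  proof (rule cINF_greatest)
    fix \<alpha> :: 'a
    have "(INF \<alpha>. f \<alpha>) \<le> f \<alpha>" by (rule cINF_lower[OF assms(1)]) simp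
    then show "(INF \<alpha>. f \<alpha>) - D \<le> g \<alpha>" using assms(2)[of \<alpha>] by linarith
  qed simp
  then show ?thesis by linarith
qed

lemma INF_sd:
  fixes f1 f2 g :: "'a \<Rightarrow> real"
  assumes "bdd_below (range f1)" "bdd_below (range f2)" "\<And>\<alpha>. f1 \<alpha> + f2 \<alpha> - 2 * g \<alpha> \<le> D"
  shows "(INF \<alpha>. f1 \<alpha>) + (INF \<alpha>. f2 \<alpha>) - 2 * (INF \<alpha>. g \<alpha>) \<le> D"
proof -
  have "((INF \<alpha>. f1 \<alpha>) + (INF \<alpha>. f2 \<alpha>) - D) / 2 \<le> (INF \<alpha>. g \<alpha>)"
  proof (rule cINF_greatest)
    fix \<alpha> :: 'a
    have "(INF \<alpha>. f1 \<alpha>) \<le> f1 \<alpha>" by (rule cINF_lower[OF assms(1)]) simp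
    moreover have "(INF \<alpha>. f2 \<alpha>) \<le> f2 \<alpha>" by (rule cINF_lower[OF assms(2)]) simp
    ultimately have "(INF \<alpha>. f1 \<alpha>) + (INF \<alpha>. f2 \<alpha>) - D \<le> 2 * g \<alpha>" using assms(3)[of \<alpha>] by linarith
    then show "((INF \<alpha>. f1 \<alpha>) + (INF \<alpha>. f2 \<alpha>) - D) / 2 \<le> g \<alpha>" by simp
  qed simp
  then have "(INF \<alpha>. f1 \<alpha>) + (INF \<alpha>. f2 \<alpha>) - D \<le> 2 * (INF \<alpha>. g \<alpha>)" by (simp add: field_simps)
  then show ?thesis by linarith
qed

lemma INF_lb:
  fixes f :: "'a \<Rightarrow> real"
  assumes "\<And>\<alpha>. c \<le> f \<alpha>"
  shows "c \<le> (INF \<alpha>. f \<alpha>)"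
  by (rule cINF_greatest) (simp_all add: assms)

lemma scale_le: "(r::real) > 0 \<Longrightarrow> a \<le> b + 2 * r * D \<Longrightarrow> (1 / (2 * r)) * a \<le> (1 / (2 * r)) * b + D"
  by (simp add: field_simps)

lemma scale_sd:
  assumes "(r::real) > 0" "a + b - 2 * c \<le> 2 * r * D"
  shows "(1 / (2 * r)) * a + (1 / (2 * r)) * b - 2 * ((1 / (2 * r)) * c) \<le> D"
proof -
  have "(1 / (2 * r)) * a + (1 / (2 * r)) * b - 2 * ((1 / (2 * r)) * c) = (1 / (2 * r)) * (a + b - 2 * c)"
    by (simp only: right_diff_distrib distrib_left mult.left_commute)
  also have "\<dots> \<le> (1 / (2 * r)) * (2 * r * D)" using assms by (intro mult_left_mono) simp_all
  also have "\<dots> = D" using assms by simp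
  finally show ?thesis .
qed

lemma sum_comb: "(\<Sum>l\<in>A. a l + b l - 2 * c l) = (\<Sum>l\<in>A. a l) + (\<Sum>l\<in>A. b l) - 2 * (\<Sum>l\<in>A. (c l :: real))"
  by (simp only: sum_subtractf sum.distrib sum_distrib_left)

lemma lin3: "(x1::real) + x2 - 2 * x0 \<le> dd \<Longrightarrow> z1 + z2 - 2 * z0 \<le> ee \<Longrightarrow>
    (x1 + y + z1) + (x2 + y + z2) - 2 * (x0 + y + z0) \<le> dd + ee"
  by (simp add: algebra_simps)

lemma scale_ge: "(r::real) > 0 \<Longrightarrow> 2 * r * c \<le> a \<Longrightarrow> c \<le> (1 / (2 * r)) * a"
  by (simp add: field_simps)

definition ExS :: "(int^'n \<Rightarrow> real^'n \<Rightarrow> real) \<Rightarrow> (real^'n \<Rightarrow> (real^'n) measure \<Rightarrow> real)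
    \<Rightarrow> (real \<Rightarrow> real^'r^'n) \<Rightarrow> real \<Rightarrow> real \<Rightarrow> (real \<Rightarrow> (real^'n) measure)
    \<Rightarrow> (int^'n \<Rightarrow> real) \<Rightarrow> real \<Rightarrow> int^'n \<Rightarrow> real^'n \<Rightarrow> real" where
  "ExS \<phi> F \<sigma> \<rho> h \<mu> w tk i \<alpha> =
     (1 / (2 * real CARD('r))) *
            (\<Sum>l\<in>(UNIV :: 'r set).
               interp \<phi> \<rho> w (gp \<rho> i - h *\<^sub>R \<alpha> + sqrt (h * real CARD('r)) *\<^sub>R column l (\<sigma> tk))
             + interp \<phi> \<rho> w (gp \<rho> i - h *\<^sub>R \<alpha> - sqrt (h * real CARD('r)) *\<^sub>R column l (\<sigma> tk)))
          + h / 2 * (norm \<alpha>)\<^sup>2 + h * F (gp \<rho> i) (\<mu> tk)"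

lemma V_Suc: "scheme_vals \<phi> F G \<sigma> T \<rho> h N \<mu> (Suc m) i =
   (INF \<alpha>. ExS \<phi> F \<sigma> \<rho> h \<mu> (scheme_vals \<phi> F G \<sigma> T \<rho> h N \<mu> m) (real (N - Suc m) * h) i \<alpha>)"
  by (simp only: scheme_vals.simps Let_def ExS_def)

lemma V_0: "scheme_vals \<phi> F G \<sigma> T \<rho> h N \<mu> 0 i = G (gp \<rho> i) (\<mu> T)"
  by simp

context
  fixes Tri :: "(int^'n) set set" and \<phi> :: "int^'n \<Rightarrow> real^'n \<Rightarrow> real"
    and F G :: "real^'n \<Rightarrow> (real^'n) measure \<Rightarrow> real" and \<sigma> :: "real \<Rightarrow> real^'r^'n"
    and T \<rho> h CF CG :: real and N :: nat and \<mu> :: "real \<Rightarrow> (real^'n) measure"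
  assumes RT: "regular_triangulation Tri" and BC: "barycentric_coords Tri \<phi>"
    and rho: "\<rho> > 0" and hpos: "h > 0" and NhT: "real N * h = T"
    and CF0: "CF \<ge> 0" and CG0: "CG \<ge> 0"
    and PF: "\<And>t. t \<in> {0..T} \<Longrightarrow> (\<forall>x. \<bar>F x (\<mu> t)\<bar> \<le> CF) \<and> (\<forall>x y. \<bar>F x (\<mu> t) - F y (\<mu> t)\<bar> \<le> CF * norm (x - y)) \<and>
            (\<forall>x y. F (x + y) (\<mu> t) + F (x - y) (\<mu> t) - 2 * F x (\<mu> t) \<le> CF * (norm y)\<^sup>2)"
    and PG: "(\<forall>x. \<bar>G x (\<mu> T)\<bar> \<le> CG) \<and> (\<forall>x y. \<bar>G x (\<mu> T) - G y (\<mu> T)\<bar> \<le> CG * norm (x - y)) \<and>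
            (\<forall>x y. G (x + y) (\<mu> T) + G (x - y) (\<mu> T) - 2 * G x (\<mu> T) \<le> CG * (norm y)\<^sup>2)"
begin

lemma tk_in: "real (N - Suc m) * h \<in> {0..T}"
proof -
  have "real (N - Suc m) \<le> real N" by simp
  then have "real (N - Suc m) * h \<le> real N * h" using hpos by (intro mult_right_mono) simp_all
  then show ?thesis using hpos NhT by simp
qed

lemma rpos: "real CARD('r) > 0" by simp

lemma ExS_lb:
  assumes tk: "tk \<in> {0..T}" and c: "\<And>l. c \<le> w l"
  shows "c - h * CF \<le> ExS \<phi> F \<sigma> \<rho> h \<mu> w tk i \<alpha>"
proof -
  let ?r = "real CARD('r)"
  define A where "A l = interp \<phi> \<rho> w (gp \<rho> i - h *\<^sub>R \<alpha> + sqrt (h * ?r) *\<^sub>R column l (\<sigma> tk))" for l :: 'r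
  define B where "B l = interp \<phi> \<rho> w (gp \<rho> i - h *\<^sub>R \<alpha> - sqrt (h * ?r) *\<^sub>R column l (\<sigma> tk))" for l :: 'r
  have "(\<Sum>l\<in>(UNIV::'r set). c + c) \<le> (\<Sum>l\<in>UNIV. A l + B l)"
    unfolding A_def B_def by (intro sum_mono add_mono J_ge[OF RT BC] c)
  then have "2 * ?r * c \<le> (\<Sum>l\<in>UNIV. A l + B l)" by (simp add: algebra_simps)
  then have s: "c \<le> (1 / (2 * ?r)) * (\<Sum>l\<in>UNIV. A l + B l)"
    by (rule scale_ge[OF rpos])
  have "\<bar>F (gp \<rho> i) (\<mu> tk)\<bar> \<le> CF" using PF[OF tk] by blast
  then have f: "- CF \<le> F (gp \<rho> i) (\<mu> tk)" by (simp add: abs_le_iff)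
  have "c - h * CF \<le> (1 / (2 * ?r)) * (\<Sum>l\<in>UNIV. A l + B l) + h / 2 * (norm \<alpha>)\<^sup>2 + h * F (gp \<rho> i) (\<mu> tk)"
  proof -
    have "h * (- CF) \<le> h * F (gp \<rho> i) (\<mu> tk)" using hpos f by (intro mult_left_mono) simp_all
    moreover have "0 \<le> h / 2 * (norm \<alpha>)\<^sup>2" using hpos by simp
    ultimately show ?thesis using s by linarith
  qed
  then show ?thesis unfolding ExS_def A_def B_def .
qed

lemma Ex_bdd:
  assumes tk: "tk \<in> {0..T}" and c: "\<And>l. c \<le> w l"
  shows "bdd_below (range (ExS \<phi> F \<sigma> \<rho> h \<mu> w tk i))"
proof -
  have "\<forall>\<alpha>. c - h * CF \<le> ExS \<phi> F \<sigma> \<rho> h \<mu> w tk i \<alpha>" using ExS_lb[OF tk] c by blast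
  then show ?thesis by (intro bdd_belowI[of _ "c - h * CF"]) blast
qed

lemma Ex_lip:
  assumes tk: "tk \<in> {0..T}" and D: "\<And>l. w (l + q) - w l \<le> D"
  shows "ExS \<phi> F \<sigma> \<rho> h \<mu> w tk (i + q) \<alpha> \<le> ExS \<phi> F \<sigma> \<rho> h \<mu> w tk i \<alpha> + (D + h * CF * norm (gp \<rho> q))"
proof -
  let ?r = "real CARD('r)"
  define P where "P l = gp \<rho> i - h *\<^sub>R \<alpha> + sqrt (h * ?r) *\<^sub>R column l (\<sigma> tk)" for l :: 'r
  define Q where "Q l = gp \<rho> i - h *\<^sub>R \<alpha> - sqrt (h * ?r) *\<^sub>R column l (\<sigma> tk)" for l :: 'r
  have sh: "interp \<phi> \<rho> w (p + gp \<rho> q) \<le> interp \<phi> \<rho> w p + D" for p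
  proof -
    have "interp \<phi> \<rho> w (p + gp \<rho> q) - interp \<phi> \<rho> w p = interp \<phi> \<rho> (\<lambda>l. w (l + q) - w l) p"
      unfolding interp_trans[OF RT BC rho] interp_diff ..
    also have "\<dots> \<le> D" by (rule J_le[OF RT BC]) (rule D)
    finally show ?thesis by simp
  qed
  have P': "gp \<rho> (i + q) - h *\<^sub>R \<alpha> + sqrt (h * ?r) *\<^sub>R column l (\<sigma> tk) = P l + gp \<rho> q" for l
    unfolding P_def gp_add by (simp add: algebra_simps)
  have Q': "gp \<rho> (i + q) - h *\<^sub>R \<alpha> - sqrt (h * ?r) *\<^sub>R column l (\<sigma> tk) = Q l + gp \<rho> q" for l
    unfolding Q_def gp_add by (simp add: algebra_simps)
  have "(\<Sum>l\<in>(UNIV::'r set). interp \<phi> \<rho> w (P l + gp \<rho> q) + interp \<phi> \<rho> w (Q l + gp \<rho> q))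
      \<le> (\<Sum>l\<in>(UNIV::'r set). (interp \<phi> \<rho> w (P l) + interp \<phi> \<rho> w (Q l)) + 2 * D)"
  proof (rule sum_mono)
    fix l :: 'r
    show "interp \<phi> \<rho> w (P l + gp \<rho> q) + interp \<phi> \<rho> w (Q l + gp \<rho> q)
      \<le> (interp \<phi> \<rho> w (P l) + interp \<phi> \<rho> w (Q l)) + 2 * D"
      using sh[of "P l"] sh[of "Q l"] by linarith
  qed
  also have "\<dots> = (\<Sum>l\<in>(UNIV::'r set). interp \<phi> \<rho> w (P l) + interp \<phi> \<rho> w (Q l)) + 2 * ?r * D"
    by (simp add: sum.distrib)
  finally have s: "(1 / (2 * ?r)) * (\<Sum>l\<in>(UNIV::'r set). interp \<phi> \<rho> w (P l + gp \<rho> q) + interp \<phi> \<rho> w (Q l + gp \<rho> q))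
      \<le> (1 / (2 * ?r)) * (\<Sum>l\<in>(UNIV::'r set). interp \<phi> \<rho> w (P l) + interp \<phi> \<rho> w (Q l)) + D"
    by (rule scale_le[OF rpos])
  have "F (gp \<rho> i + gp \<rho> q) (\<mu> tk) - F (gp \<rho> i) (\<mu> tk) \<le> CF * norm (gp \<rho> q)"
  proof -
    have "\<bar>F (gp \<rho> i + gp \<rho> q) (\<mu> tk) - F (gp \<rho> i) (\<mu> tk)\<bar> \<le> CF * norm ((gp \<rho> i + gp \<rho> q) - gp \<rho> i)"
      using PF[OF tk] by blast
    then show ?thesis by simp
  qed
  then have "h * F (gp \<rho> i + gp \<rho> q) (\<mu> tk) \<le> h * (F (gp \<rho> i) (\<mu> tk) + CF * norm (gp \<rho> q))"
    using hpos by (intro mult_left_mono) simp_all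
  then have f: "h * F (gp \<rho> (i + q)) (\<mu> tk) \<le> h * F (gp \<rho> i) (\<mu> tk) + h * CF * norm (gp \<rho> q)"
    unfolding gp_add by (simp add: algebra_simps)
  show ?thesis unfolding ExS_def P' Q' using s f
    unfolding P_def Q_def by linarith
qed


lemma Ex_sd:
  assumes tk: "tk \<in> {0..T}" and D: "\<And>l. w (l + j) + w (l + - j) - 2 * w l \<le> D"
  shows "ExS \<phi> F \<sigma> \<rho> h \<mu> w tk (i + j) \<alpha> + ExS \<phi> F \<sigma> \<rho> h \<mu> w tk (i + - j) \<alpha> - 2 * ExS \<phi> F \<sigma> \<rho> h \<mu> w tk i \<alpha>
      \<le> D + h * CF * (norm (gp \<rho> j))\<^sup>2"
proof -
  let ?r = "real CARD('r)"
  define P where "P l = gp \<rho> i - h *\<^sub>R \<alpha> + sqrt (h * ?r) *\<^sub>R column l (\<sigma> tk)" for l :: 'r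
  define Q where "Q l = gp \<rho> i - h *\<^sub>R \<alpha> - sqrt (h * ?r) *\<^sub>R column l (\<sigma> tk)" for l :: 'r
  have sh: "interp \<phi> \<rho> w (p + gp \<rho> j) + interp \<phi> \<rho> w (p + gp \<rho> (- j)) - 2 * interp \<phi> \<rho> w p \<le> D" for p
  proof -
    have "interp \<phi> \<rho> w (p + gp \<rho> j) + interp \<phi> \<rho> w (p + gp \<rho> (- j)) - 2 * interp \<phi> \<rho> w p
        = interp \<phi> \<rho> (\<lambda>l. w (l + j) + w (l + - j) - 2 * w l) p"
      unfolding interp_trans[OF RT BC rho] interp_sd ..
    also have "\<dots> \<le> D" by (rule J_le[OF RT BC]) (rule D)
    finally show ?thesis .
  qed
  have P': "gp \<rho> (i + k) - h *\<^sub>R \<alpha> + sqrt (h * ?r) *\<^sub>R column l (\<sigma> tk) = P l + gp \<rho> k" for l k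
    unfolding P_def gp_add by (simp add: algebra_simps)
  have Q': "gp \<rho> (i + k) - h *\<^sub>R \<alpha> - sqrt (h * ?r) *\<^sub>R column l (\<sigma> tk) = Q l + gp \<rho> k" for l k
    unfolding Q_def gp_add by (simp add: algebra_simps)
  define a where "a l = interp \<phi> \<rho> w (P l + gp \<rho> j) + interp \<phi> \<rho> w (Q l + gp \<rho> j)" for l
  define b where "b l = interp \<phi> \<rho> w (P l + gp \<rho> (- j)) + interp \<phi> \<rho> w (Q l + gp \<rho> (- j))" for l
  define c where "c l = interp \<phi> \<rho> w (P l) + interp \<phi> \<rho> w (Q l)" for l
  have "(\<Sum>l\<in>(UNIV::'r set). a l) + (\<Sum>l\<in>UNIV. b l) - 2 * (\<Sum>l\<in>UNIV. c l) = (\<Sum>l\<in>(UNIV::'r set). a l + b l - 2 * c l)"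
    by (rule sum_comb[symmetric])
  also have "\<dots> \<le> (\<Sum>l\<in>(UNIV::'r set). 2 * D)"
  proof (rule sum_mono)
    fix l :: 'r
    have "a l + b l - 2 * c l = (interp \<phi> \<rho> w (P l + gp \<rho> j) + interp \<phi> \<rho> w (P l + gp \<rho> (- j)) - 2 * interp \<phi> \<rho> w (P l))
       + (interp \<phi> \<rho> w (Q l + gp \<rho> j) + interp \<phi> \<rho> w (Q l + gp \<rho> (- j)) - 2 * interp \<phi> \<rho> w (Q l))"
      unfolding a_def b_def c_def by (simp add: algebra_simps)
    also have "\<dots> \<le> D + D" by (rule add_mono[OF sh sh])
    finally show "a l + b l - 2 * c l \<le> 2 * D" by simp
  qed
  also have "\<dots> = 2 * ?r * D" by simp
  finally have s: "(1 / (2 * ?r)) * (\<Sum>l\<in>(UNIV::'r set). a l) + (1 / (2 * ?r)) * (\<Sum>l\<in>UNIV. b l) - 2 * ((1 / (2 * ?r)) * (\<Sum>l\<in>UNIV. c l)) \<le> D"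
    by (rule scale_sd[OF rpos])
  have "F (gp \<rho> i + gp \<rho> j) (\<mu> tk) + F (gp \<rho> i - gp \<rho> j) (\<mu> tk) - 2 * F (gp \<rho> i) (\<mu> tk) \<le> CF * (norm (gp \<rho> j))\<^sup>2"
    using PF[OF tk] by blast
  then have "h * (F (gp \<rho> i + gp \<rho> j) (\<mu> tk) + F (gp \<rho> i - gp \<rho> j) (\<mu> tk) - 2 * F (gp \<rho> i) (\<mu> tk)) \<le> h * (CF * (norm (gp \<rho> j))\<^sup>2)"
    using hpos by (intro mult_left_mono) simp_all
  then have f: "h * F (gp \<rho> (i + j)) (\<mu> tk) + h * F (gp \<rho> (i + - j)) (\<mu> tk) - 2 * (h * F (gp \<rho> i) (\<mu> tk)) \<le> h * CF * (norm (gp \<rho> j))\<^sup>2"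
    unfolding gp_add gp_uminus by (simp add: algebra_simps)
  show ?thesis unfolding ExS_def P' Q' P_def Q_def
    by (rule lin3[OF s f, unfolded a_def b_def c_def P_def Q_def])
qed

lemma V_lb: "- (CG + real m * h * CF) \<le> scheme_vals \<phi> F G \<sigma> T \<rho> h N \<mu> m l"
proof (induction m arbitrary: l)
  case 0
  have "\<bar>G (gp \<rho> l) (\<mu> T)\<bar> \<le> CG" using PG by blast
  then show ?case by (simp add: abs_le_iff)
next
  case (Suc m)
  have "- (CG + real m * h * CF) - h * CF \<le> (INF \<alpha>. ExS \<phi> F \<sigma> \<rho> h \<mu> (scheme_vals \<phi> F G \<sigma> T \<rho> h N \<mu> m) (real (N - Suc m) * h) l \<alpha>)"
    by (rule INF_lb, rule ExS_lb[OF tk_in]) (rule Suc.IH)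
  then show ?case unfolding V_Suc by (simp add: algebra_simps)
qed

lemma V_lip: "scheme_vals \<phi> F G \<sigma> T \<rho> h N \<mu> m (l + q) - scheme_vals \<phi> F G \<sigma> T \<rho> h N \<mu> m l \<le> (CG + real m * h * CF) * norm (gp \<rho> q)"
proof (induction m arbitrary: l q)
  case 0
  have "\<bar>G (gp \<rho> l + gp \<rho> q) (\<mu> T) - G (gp \<rho> l) (\<mu> T)\<bar> \<le> CG * norm (gp \<rho> l + gp \<rho> q - gp \<rho> l)"
    using PG by blast
  then show ?case unfolding V_0 gp_add by simp
next
  case (Suc m)
  let ?w = "scheme_vals \<phi> F G \<sigma> T \<rho> h N \<mu> m"
  let ?tk = "real (N - Suc m) * h"
  have "(INF \<alpha>. ExS \<phi> F \<sigma> \<rho> h \<mu> ?w ?tk (l + q) \<alpha>) \<le> (INF \<alpha>. ExS \<phi> F \<sigma> \<rho> h \<mu> ?w ?tk l \<alpha>) +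
      ((CG + real m * h * CF) * norm (gp \<rho> q) + h * CF * norm (gp \<rho> q))"
    by (rule INF_shift, rule Ex_bdd[OF tk_in], rule V_lb, rule Ex_lip[OF tk_in], rule Suc.IH)
  then show ?case unfolding V_Suc by (simp add: algebra_simps)
qed

lemma V_sd: "scheme_vals \<phi> F G \<sigma> T \<rho> h N \<mu> m (l + j) + scheme_vals \<phi> F G \<sigma> T \<rho> h N \<mu> m (l + - j)
    - 2 * scheme_vals \<phi> F G \<sigma> T \<rho> h N \<mu> m l \<le> (CG + real m * h * CF) * (norm (gp \<rho> j))\<^sup>2"
proof (induction m arbitrary: l j)
  case 0
  have "G (gp \<rho> l + gp \<rho> j) (\<mu> T) + G (gp \<rho> l - gp \<rho> j) (\<mu> T) - 2 * G (gp \<rho> l) (\<mu> T) \<le> CG * (norm (gp \<rho> j))\<^sup>2"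
    using PG by blast
  then show ?case unfolding V_0 gp_add gp_uminus by simp
next
  case (Suc m)
  let ?w = "scheme_vals \<phi> F G \<sigma> T \<rho> h N \<mu> m"
  let ?tk = "real (N - Suc m) * h"
  have "(INF \<alpha>. ExS \<phi> F \<sigma> \<rho> h \<mu> ?w ?tk (l + j) \<alpha>) + (INF \<alpha>. ExS \<phi> F \<sigma> \<rho> h \<mu> ?w ?tk (l + - j) \<alpha>)
      - 2 * (INF \<alpha>. ExS \<phi> F \<sigma> \<rho> h \<mu> ?w ?tk l \<alpha>) \<le>
      ((CG + real m * h * CF) * (norm (gp \<rho> j))\<^sup>2 + h * CF * (norm (gp \<rho> j))\<^sup>2)"
    by (rule INF_sd, rule Ex_bdd[OF tk_in], rule V_lb, rule Ex_bdd[OF tk_in], rule V_lb, rule Ex_sd[OF tk_in], rule Suc.IH)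
  then show ?case unfolding V_Suc by (simp add: algebra_simps)
qed

end

theorem lemma3p2:
  fixes F G :: "real^'n \<Rightarrow> (real^'n) measure \<Rightarrow> real"
    and \<sigma> :: "real \<Rightarrow> real^'r^'n"
    and m0 :: "(real^'n) measure"
    and T :: real
    and Tri :: "(int^'n) set set"
    and \<phi> :: "int^'n \<Rightarrow> real^'n \<Rightarrow> real"
  assumes "T > 0"
    and "A1 T F G \<sigma> m0"
    and "regular_triangulation Tri"
    and "barycentric_coords Tri \<phi>"
  shows "(\<exists>c>0. \<forall>\<rho> h N \<mu> t. \<rho> > 0 \<longrightarrow> h > 0 \<longrightarrow> real N * h = T \<longrightarrow> cont_P1_curve T \<mu> \<longrightarrow>
            t \<in> {0..T} \<longrightarrow> c-lipschitz_on UNIV (\<lambda>x. v_rh \<phi> F G \<sigma> T \<rho> h N \<mu> x t))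
       \<and> (\<exists>c>0. \<forall>\<rho> h N \<mu> t i j. \<rho> > 0 \<longrightarrow> h > 0 \<longrightarrow> real N * h = T \<longrightarrow> cont_P1_curve T \<mu> \<longrightarrow>
            t \<in> {0..T} \<longrightarrow>
            v_rh \<phi> F G \<sigma> T \<rho> h N \<mu> (gp \<rho> i + gp \<rho> j) t - 2 * v_rh \<phi> F G \<sigma> T \<rho> h N \<mu> (gp \<rho> i) t
              + v_rh \<phi> F G \<sigma> T \<rho> h N \<mu> (gp \<rho> i - gp \<rho> j) t \<le> c * (norm (gp \<rho> j))\<^sup>2)"
proof -
  have AF: "A1_coupling F" and AG: "A1_coupling G" using assms(2) unfolding A1_def by blast+
  obtain CF where CF: "CF \<ge> 0" "\<forall>m. P1 m \<longrightarrow> (\<forall>x. \<bar>F x m\<bar> \<le> CF) \<and> (\<forall>x y. \<bar>F x m - F y m\<bar> \<le> CF * norm (x - y)) \<and>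
            (\<forall>x y. F (x + y) m + F (x - y) m - 2 * F x m \<le> CF * (norm y)\<^sup>2)"
    using coupling_bounds[of P1 F] AF unfolding A1_coupling_def by blast
  obtain CG where CG: "CG \<ge> 0" "\<forall>m. P1 m \<longrightarrow> (\<forall>x. \<bar>G x m\<bar> \<le> CG) \<and> (\<forall>x y. \<bar>G x m - G y m\<bar> \<le> CG * norm (x - y)) \<and>
            (\<forall>x y. G (x + y) m + G (x - y) m - 2 * G x m \<le> CG * (norm y)\<^sup>2)"
    using coupling_bounds[of P1 G] AG unfolding A1_coupling_def by blast
  obtain Ci where Ci: "Ci \<ge> 0" "\<forall>\<rho> w L. \<rho> > 0 \<longrightarrow> L \<ge> 0 \<longrightarrow>
    (\<forall>a b. \<bar>w a - w b\<bar> \<le> L * norm (gp \<rho> a - gp \<rho> b)) \<longrightarrow> (Ci * L)-lipschitz_on UNIV (interp \<phi> \<rho> w)"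
    using interp_lip_ex[OF assms(3) assms(4)] by blast
  have common: "\<And>t. t \<in> {0..T} \<Longrightarrow> (\<forall>x. \<bar>F x (\<mu> t)\<bar> \<le> CF) \<and> (\<forall>x y. \<bar>F x (\<mu> t) - F y (\<mu> t)\<bar> \<le> CF * norm (x - y)) \<and>
            (\<forall>x y. F (x + y) (\<mu> t) + F (x - y) (\<mu> t) - 2 * F x (\<mu> t) \<le> CF * (norm y)\<^sup>2)"
    if "cont_P1_curve T \<mu>" for \<mu> :: "real \<Rightarrow> (real^'n) measure"
  proof -
    fix t assume t: "t \<in> {0..T}"
    have "P1 (\<mu> t)" using that t unfolding cont_P1_curve_def by blast
    then show "(\<forall>x. \<bar>F x (\<mu> t)\<bar> \<le> CF) \<and> (\<forall>x y. \<bar>F x (\<mu> t) - F y (\<mu> t)\<bar> \<le> CF * norm (x - y)) \<and>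
            (\<forall>x y. F (x + y) (\<mu> t) + F (x - y) (\<mu> t) - 2 * F x (\<mu> t) \<le> CF * (norm y)\<^sup>2)"
      using CF(2) by blast
  qed
  have commonG: "(\<forall>x. \<bar>G x (\<mu> T)\<bar> \<le> CG) \<and> (\<forall>x y. \<bar>G x (\<mu> T) - G y (\<mu> T)\<bar> \<le> CG * norm (x - y)) \<and>
            (\<forall>x y. G (x + y) (\<mu> T) + G (x - y) (\<mu> T) - 2 * G x (\<mu> T) \<le> CG * (norm y)\<^sup>2)"
    if "cont_P1_curve T \<mu>" for \<mu> :: "real \<Rightarrow> (real^'n) measure"
  proof -
    have "T \<in> {0..T}" using assms(1) by simp
    then have "P1 (\<mu> T)" using that unfolding cont_P1_curve_def by blast
    then show ?thesis using CG(2) by blast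
  qed
  have mT: "real (N - k) * h \<le> T" if "h > 0" "real N * h = T" for N k :: nat and h :: real
  proof -
    have "real (N - k) \<le> real N" by simp
    then have "real (N - k) * h \<le> real N * h" using that by (intro mult_right_mono) simp_all
    then show ?thesis using that by simp
  qed
  define c1 where "c1 = max 1 (Ci * (CG + T * CF))"
  define c2 where "c2 = max 1 (CG + T * CF)"
  have part1: "c1-lipschitz_on UNIV (\<lambda>x. v_rh \<phi> F G \<sigma> T \<rho> h N \<mu> x t)"
    if r: "\<rho> > 0" and hp: "h > 0" and NT: "real N * h = T" and mu: "cont_P1_curve T \<mu>" for \<rho> h N \<mu> t
  proof -
    define m where "m = N - nat \<lfloor>t / h\<rfloor>"
    let ?V = "scheme_vals \<phi> F G \<sigma> T \<rho> h N \<mu> m"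
    define L where "L = CG + real m * h * CF"
    have L0: "L \<ge> 0" unfolding L_def using CG(1) CF(1) hp by simp
    have LT: "L \<le> CG + T * CF"
    proof -
      have "real m * h \<le> T" unfolding m_def by (rule mT[OF hp NT])
      then have "real m * h * CF \<le> T * CF" using CF(1) by (rule mult_right_mono)
      then show ?thesis unfolding L_def by simp
    qed
    have vl: "?V (l + q) - ?V l \<le> L * norm (gp \<rho> q)" for l q
      unfolding L_def by (rule V_lip[where Tri=Tri and \<phi>=\<phi> and F=F and G=G and \<sigma>=\<sigma> and T=T and \<rho>=\<rho> and h=h and CF=CF and CG=CG and N=N and \<mu>=\<mu>, OF assms(3) assms(4) r hp NT CF(1) CG(1) common[OF mu] commonG[OF mu]])
    have wl: "\<forall>a b. \<bar>?V a - ?V b\<bar> \<le> L * norm (gp \<rho> a - gp \<rho> b)"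
    proof (intro allI)
      fix a b :: "int^'n"
      have e1: "gp \<rho> (a - b) = gp \<rho> a - gp \<rho> b"
        by (rule gp_diff)
      have "?V (b + (a - b)) - ?V b \<le> L * norm (gp \<rho> (a - b))" by (rule vl)
      then have x1: "?V a - ?V b \<le> L * norm (gp \<rho> a - gp \<rho> b)" using e1 by simp
      have e2: "gp \<rho> (b - a) = gp \<rho> b - gp \<rho> a"
        by (rule gp_diff)
      have "?V (a + (b - a)) - ?V a \<le> L * norm (gp \<rho> (b - a))" by (rule vl)
      then have x2: "?V b - ?V a \<le> L * norm (gp \<rho> a - gp \<rho> b)" using e2 by (simp add: norm_minus_commute)
      show "\<bar>?V a - ?V b\<bar> \<le> L * norm (gp \<rho> a - gp \<rho> b)" using x1 x2 by linarith
    qed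
    have "(Ci * L)-lipschitz_on UNIV (interp \<phi> \<rho> ?V)" using Ci(2) r L0 wl by blast
    moreover have "Ci * L \<le> c1" unfolding c1_def using Ci(1) LT
      by (meson max.coboundedI2 mult_left_mono)
    ultimately have "c1-lipschitz_on UNIV (interp \<phi> \<rho> ?V)" by (rule lipschitz_on_le)
    moreover have eqv: "(\<lambda>x. v_rh \<phi> F G \<sigma> T \<rho> h N \<mu> x t) = interp \<phi> \<rho> ?V"
      unfolding v_rh_def v_grid_def m_def by simp
    ultimately show ?thesis by (simp only: eqv)
  qed
  have part2: "v_rh \<phi> F G \<sigma> T \<rho> h N \<mu> (gp \<rho> i + gp \<rho> j) t - 2 * v_rh \<phi> F G \<sigma> T \<rho> h N \<mu> (gp \<rho> i) t
              + v_rh \<phi> F G \<sigma> T \<rho> h N \<mu> (gp \<rho> i - gp \<rho> j) t \<le> c2 * (norm (gp \<rho> j))\<^sup>2"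
    if r: "\<rho> > 0" and hp: "h > 0" and NT: "real N * h = T" and mu: "cont_P1_curve T \<mu>" for \<rho> h N \<mu> t i j
  proof -
    define m where "m = N - nat \<lfloor>t / h\<rfloor>"
    let ?V = "scheme_vals \<phi> F G \<sigma> T \<rho> h N \<mu> m"
    define L where "L = CG + real m * h * CF"
    have LT: "L \<le> CG + T * CF"
    proof -
      have "real m * h \<le> T" unfolding m_def by (rule mT[OF hp NT])
      then have "real m * h * CF \<le> T * CF" using CF(1) by (rule mult_right_mono)
      then show ?thesis unfolding L_def by simp
    qed
    have vs: "?V (l + j) + ?V (l + - j) - 2 * ?V l \<le> L * (norm (gp \<rho> j))\<^sup>2" for l
      unfolding L_def by (rule V_sd[where Tri=Tri and \<phi>=\<phi> and F=F and G=G and \<sigma>=\<sigma> and T=T and \<rho>=\<rho> and h=h and CF=CF and CG=CG and N=N and \<mu>=\<mu>, OF assms(3) assms(4) r hp NT CF(1) CG(1) common[OF mu] commonG[OF mu]])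
    have vr: "v_rh \<phi> F G \<sigma> T \<rho> h N \<mu> x t = interp \<phi> \<rho> ?V x" for x
      unfolding v_rh_def v_grid_def m_def by simp
    have "v_rh \<phi> F G \<sigma> T \<rho> h N \<mu> (gp \<rho> i + gp \<rho> j) t + v_rh \<phi> F G \<sigma> T \<rho> h N \<mu> (gp \<rho> i - gp \<rho> j) t
        - 2 * v_rh \<phi> F G \<sigma> T \<rho> h N \<mu> (gp \<rho> i) t
        = interp \<phi> \<rho> (\<lambda>l. ?V (l + j) + ?V (l + - j) - 2 * ?V l) (gp \<rho> i)"
    proof -
      have "gp \<rho> i - gp \<rho> j = gp \<rho> i + gp \<rho> (- j)" by (simp add: gp_uminus)
      then show ?thesis unfolding vr interp_sd
        by (simp only: interp_trans[OF assms(3) assms(4) r])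
    qed
    also have "\<dots> \<le> L * (norm (gp \<rho> j))\<^sup>2" by (rule J_le[OF assms(3) assms(4)]) (rule vs)
    also have "\<dots> \<le> c2 * (norm (gp \<rho> j))\<^sup>2" unfolding c2_def using LT
      by (intro mult_right_mono) simp_all
    finally show ?thesis by linarith
  qed
  have "c1 > 0" unfolding c1_def by simp
  moreover have "c2 > 0" unfolding c2_def by simp
  ultimately show ?thesis using part1 part2 by blast
qed

end
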